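(* For every $d\ge1$ the function $g_d\colon[1,\infty)\to[1,\infty)$ satisfies: (i) $g_d$ is uniformly continuous, strictly increasing and convex; (ii) $g_d(1)=1$ and $\lim_{t\to\infty}g_d(t)=\infty$; (iii) $g_d$ is differentiable on $(1,\infty)$ with $g_d'(t)=\frac{\Gamma(\frac d2+1)}{\sqrt{\pi}\,\Gamma(\frac{d+1}{2})}\,\frac1d\,\bigl(1-\frac1{t^2}\bigr)^{(d-1)/2}$ for $t>1$; (iv) $g_d(t)-1=\mathcal O\bigl((t-1)^{(d+1)/2}\bigr)$ as $t\to1^+$; (v) $g_d$ has an inverse $g_d^{-1}\colon[1,\infty)\to[1,\infty)$ whose minimal modulus of continuity $w(h)=\sup_{s,t\ge1,\,|s-t|<h}|g_d^{-1}(s)-g_d^{-1}(t)|$ equals $g_d^{-1}(1+h)-1$ for all $h\ge0$; (vi) $w(h)=\mathcal O\bigl(h^{2/(d+1)}\bigr)$ as $h\to0^+$; (vii) $g_d^{-1}(t)=\mathcal O(t)$ as $t\to\infty$.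
   Context: For $d\ge1$ and $t\ge1$ define \[g_d(t)=1+\frac{\Gamma(\frac d2+1)}{\sqrt{\pi}\,\Gamma(\frac{d+1}{2})}\left(\frac{t}{d}\Bigl(1-\frac1{t^2}\Bigr)^{\frac{d+1}{2}}-\int_0^{\arccos(1/t)}\sin^d(s)\,\mathrm{d}s\right).\] Equivalently, for any ellipsoid $E=\{x\colon (x-\mu)^\top\Sigma^{-1}(x-\mu)\le1\}$ with $\Sigma$ symmetric positive definite, and $x\notin E$, $g_d(d_\Sigma(x,\mu))=\mathrm{vol}_d(\mathrm{conv}(E\cup\{x\}))/\mathrm{vol}_d(E)$, where $d_\Sigma(x,\mu)=\sqrt{(x-\mu)^\top\Sigma^{-1}(x-\mu)}$. *)

theory Defs
  imports "HOL-Analysis.Analysis" "HOL-Library.Landau_Symbols"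
begin

definition gconst :: "nat \<Rightarrow> real" where
  "gconst d = Gamma (real d / 2 + 1) / (sqrt pi * Gamma ((real d + 1) / 2))"

definition g :: "nat \<Rightarrow> real \<Rightarrow> real" where
  "g d t = 1 + gconst d *
     (t / real d * (1 - 1 / t\<^sup>2) powr ((real d + 1) / 2)
      - integral {0..arccos (1 / t)} (\<lambda>s. sin s ^ d))"

definition g_inv :: "nat \<Rightarrow> real \<Rightarrow> real" where
  "g_inv d = the_inv_into {1..} (g d)"

(* minimal modulus of continuity of f on A; sup of the empty set (h \<le> 0) is taken to be 0 *)
definition modulus_of_continuity :: "(real \<Rightarrow> real) \<Rightarrow> real set \<Rightarrow> real \<Rightarrow> real" where
  "modulus_of_continuity f A h =
     Sup ({\<bar>f s - f t\<bar> | s t. s \<in> A \<and> t \<in> A \<and> \<bar>s - t\<bar> < h} \<union> {0})"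

end

theory Submission
  imports Defs
begin


lemma gconst_pos: "gconst d > 0"
  unfolding gconst_def by (intro divide_pos_pos mult_pos_pos Gamma_real_pos) auto

lemma F_deriv:
  assumes "0 < x" "x < 2"
  shows "((\<lambda>x. integral {0..x} (\<lambda>s. sin s ^ d)) has_real_derivative sin x ^ d) (at x)"
proof -
  have "((\<lambda>x. integral {0..x} (\<lambda>s. sin s ^ d)) has_real_derivative sin x ^ d) (at x within {0..2})"
    by (rule integral_has_real_derivative) (use assms in \<open>auto intro!: continuous_intros\<close>)
  moreover have "at x within {0..2} = at x"
    by (rule at_within_interior) (use assms in auto)
  ultimately show ?thesis by simp
qed

lemma F_cont: "continuous_on {0..2::real} (\<lambda>x. integral {0..x} (\<lambda>s. sin s ^ d))"
  by (rule indefinite_integral_continuous_1, rule integrable_continuous_real) (auto intro!: continuous_intros)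

lemma arccos_inv_bounds:
  assumes "t \<ge> 1" shows "0 \<le> arccos (1/t)" "arccos (1/t) < 2"
proof -
  have "0 < 1/t" "1/t \<le> 1" using assms by auto
  then have "arccos (1/t) \<le> pi/2" by (intro arccos_le_pi2) auto
  then show "arccos (1/t) < 2" using pi_less_4 by simp
  show "0 \<le> arccos (1/t)" using \<open>0 < 1/t\<close> \<open>1/t \<le> 1\<close> by (intro arccos_lbound) linarith+
qed

lemma arccos_inv_pos:
  assumes "t > 1" shows "0 < arccos (1/t)"
  proof -
  have "-1 < 1/t" "1/t < 1" using assms by (auto simp: field_simps)
  then show ?thesis using arccos_lt_bounded[of "1/t"] by auto
qed

lemma u_nonneg: "(t::real) \<ge> 1 \<Longrightarrow> 0 \<le> 1 - 1/t\<^sup>2"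
  by (simp add: field_simps one_le_power)

lemma u_pos: "(t::real) > 1 \<Longrightarrow> 0 < 1 - 1/t\<^sup>2"
  by (simp add: field_simps one_less_power)

lemma g_cont: assumes "d \<ge> 1" shows "continuous_on {1..} (g d)"
proof -
  have c1: "continuous_on {1..} (\<lambda>t::real. (1 - 1/t\<^sup>2) powr ((real d + 1) / 2))"
  proof (rule continuous_on_powr')
    show "continuous_on {1..} (\<lambda>t::real. 1 - 1/t\<^sup>2)" by (intro continuous_intros) auto
    show "continuous_on {1..} (\<lambda>t::real. (real d + 1) / 2)" by (intro continuous_intros)
    show "\<forall>x::real\<in>{1..}. 0 \<le> 1 - 1 / x\<^sup>2 \<and> (1 - 1 / x\<^sup>2 = 0 \<longrightarrow> 0 < (real d + 1) / 2)"
    proof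
      fix x :: real assume "x \<in> {1..}"
      then have "0 \<le> 1 - 1 / x\<^sup>2" by (intro u_nonneg) simp
      moreover have "0 < (real d + 1) / 2" by simp
      ultimately show "0 \<le> 1 - 1 / x\<^sup>2 \<and> (1 - 1 / x\<^sup>2 = 0 \<longrightarrow> 0 < (real d + 1) / 2)" by simp
    qed
  qed
  have c2: "continuous_on {1..} (\<lambda>t::real. arccos (1/t))"
    by (intro continuous_on_arccos' continuous_intros) (auto simp: field_simps)
  have c3: "continuous_on {1..} (\<lambda>t::real. integral {0..arccos (1/t)} (\<lambda>s. sin s ^ d))"
    using continuous_on_compose2[OF F_cont c2] arccos_inv_bounds by fastforce
  show ?thesis unfolding g_def
    by (intro continuous_on_add continuous_on_const continuous_on_mult continuous_on_diff continuous_on_divide c1 c3 continuous_on_id) (use assms in auto)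
qed



lemma g_deriv:
  assumes d: "d \<ge> 1" and t: "t > 1"
  shows "(g d has_real_derivative
            gconst d * (1 / real d) * (1 - 1 / t\<^sup>2) powr ((real d - 1) / 2)) (at t)"
proof -
  define u where "u = 1 - 1/t\<^sup>2"
  have u: "0 < u" "u < 1" using u_pos[OF t] t by (auto simp: u_def)
  have tinv: "-1 < 1/t" "1/t < 1" using t by (auto simp: field_simps)
  let ?e = "(real d + 1) / 2"
  have d1: "((\<lambda>t. t / real d * (1 - 1/t\<^sup>2) powr ?e) has_real_derivative
      (1 / real d * u powr ?e + t / real d * (?e * u powr (?e - 1) * (2 / t^3)))) (at t)"
    unfolding u_def
    apply (rule derivative_eq_intros refl | use t d u_pos[OF t] in force)+
    using t by (simp add: field_simps power2_eq_square power3_eq_cube)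
  have a: "0 < arccos (1/t)" "arccos (1/t) < 2" using arccos_inv_pos[OF t] arccos_inv_bounds[of t] t by auto
  have d2: "((\<lambda>t. integral {0..arccos (1/t)} (\<lambda>s. sin s ^ d)) has_real_derivative
      (sin (arccos (1/t)) ^ d * (inverse (- sqrt (1 - (1/t)\<^sup>2)) * (- 1 / t\<^sup>2)))) (at t)"
  proof -
    have "((\<lambda>t. arccos (1/t)) has_real_derivative (inverse (- sqrt (1 - (1/t)\<^sup>2)) * (- 1 / t\<^sup>2))) (at t)"
      apply (rule DERIV_chain2[where g="\<lambda>t. 1/t" and x=t, OF DERIV_arccos[OF tinv]])
      apply (rule derivative_eq_intros refl | use t in force)+
      using t by (simp add: field_simps power2_eq_square)
    from DERIV_chain2[where g="\<lambda>t. arccos (1/t)" and x=t, OF F_deriv[OF a] this] show ?thesis by simp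
  qed
  have eq: "gconst d * ((1 / real d * u powr ?e + t / real d * (?e * u powr (?e - 1) * (2 / t^3)))
      - sin (arccos (1/t)) ^ d * (inverse (- sqrt (1 - (1/t)\<^sup>2)) * (- 1 / t\<^sup>2)))
      = gconst d * (1 / real d) * u powr ((real d - 1) / 2)"
  proof -
    define w where "w = u powr ((real d - 1) / 2)"
    have s: "sqrt (1 - (1/t)\<^sup>2) = u powr (1/2)" using u by (simp add: u_def sqrt_def powr_half_sqrt power_divide)
    have s2: "sin (arccos (1/t)) = u powr (1/2)" using tinv s by (simp add: sin_arccos)
    have "sin (arccos (1/t)) ^ d = u powr (real d / 2)"
      unfolding s2 using u by (simp add: powr_realpow[symmetric] powr_powr)
    then have B: "sin (arccos (1/t)) ^ d * inverse (- sqrt (1 - (1/t)\<^sup>2)) = - w"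
      unfolding s w_def using u
      by (simp add: powr_minus[symmetric] divide_inverse[symmetric] powr_diff[symmetric] diff_divide_distrib powr_add[symmetric])
    have "?e = 1 + (real d - 1) / 2" by (simp add: field_simps)
    then have A1: "u powr ?e = u * w" unfolding w_def using u
      by (simp only: powr_add) (use u in simp)
    have A2: "u powr (?e - 1) = w" unfolding w_def using u by (simp add: field_simps)
    have "(1 / real d * u powr ?e + t / real d * (?e * u powr (?e - 1) * (2 / t^3)))
      - sin (arccos (1/t)) ^ d * (inverse (- sqrt (1 - (1/t)\<^sup>2)) * (- 1 / t\<^sup>2))
      = w * (u + (real d + 1) / t\<^sup>2 - real d / t\<^sup>2) / real d"
      unfolding A1 A2 mult.assoc[symmetric] B using d t
      by (simp add: field_simps power2_eq_square power3_eq_cube)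
    also have "\<dots> = w / real d" unfolding u_def using d t by (simp add: field_simps)
    finally show ?thesis unfolding w_def by simp
  qed
  have "(g d has_real_derivative gconst d * ((1 / real d * u powr ?e + t / real d * (?e * u powr (?e - 1) * (2 / t^3)))
      - sin (arccos (1/t)) ^ d * (inverse (- sqrt (1 - (1/t)\<^sup>2)) * (- 1 / t\<^sup>2)))) (at t)"
    unfolding g_def[abs_def]
    by (rule derivative_eq_intros d1 d2 refl)+ simp
  then show ?thesis unfolding eq unfolding u_def .
qed



definition gd' :: "nat \<Rightarrow> real \<Rightarrow> real" where
  "gd' d t = gconst d * (1 / real d) * (1 - 1 / t\<^sup>2) powr ((real d - 1) / 2)"

context fixes d :: nat assumes d: "d \<ge> 1"
begin

lemma g1: "g d 1 = 1"
  unfolding g_def by simp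

lemma gd'_pos: assumes "t > 1" shows "gd' d t > 0"
proof -
  have "0 < (1 - 1 / t\<^sup>2) powr ((real d - 1) / 2)" using u_pos[OF assms] by (metis powr_gt_zero less_irrefl)
  then show ?thesis unfolding gd'_def using gconst_pos[of d] d by simp
qed

lemma gd'_mono: assumes "1 < x" "x \<le> y" shows "gd' d x \<le> gd' d y"
proof -
  have "1 - 1/x\<^sup>2 \<le> 1 - 1/y\<^sup>2" using assms by (auto simp: field_simps power_mono)
  then have "(1 - 1/x\<^sup>2) powr ((real d - 1) / 2) \<le> (1 - 1/y\<^sup>2) powr ((real d - 1) / 2)"
    using d u_pos[of x] assms by (intro powr_mono2) auto
  then show ?thesis unfolding gd'_def using gconst_pos[of d] d
    by (intro mult_left_mono) auto
qed

lemma gd'_le: assumes "1 < x" shows "gd' d x \<le> gconst d / real d"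
proof -
  have "(1 - 1/x\<^sup>2) powr ((real d - 1) / 2) \<le> 1"
    using d u_pos[of x] assms by (intro powr_le1) (auto)
  then show ?thesis unfolding gd'_def using gconst_pos[of d] d
    by (simp add: divide_right_mono mult_left_le)
qed

lemma g_mvt: assumes "1 \<le> a" "a < b" shows "\<exists>z. a < z \<and> z < b \<and> g d b - g d a = (b - a) * gd' d z"
proof -
  have "continuous_on {a..b} (g d)" using g_cont[OF d] by (rule continuous_on_subset) (use assms in auto)
  moreover have "g d differentiable (at x)" if "a < x" "x < b" for x
    using g_deriv[OF d, of x] that assms by (auto simp: real_differentiable_def)
  ultimately obtain l z where "a < z" "z < b" "DERIV (g d) z :> l" "g d b - g d a = (b - a) * l"
    using MVT[OF assms(2)] by blast
  moreover have "DERIV (g d) z :> gd' d z" using g_deriv[OF d, of z] \<open>a < z\<close> assms unfolding gd'_def by auto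
  ultimately show ?thesis using DERIV_unique by blast
qed

lemma g_strict: assumes "1 \<le> a" "a < b" shows "g d a < g d b"
proof -
  obtain z where "a < z" "z < b" "g d b - g d a = (b - a) * gd' d z" using g_mvt[OF assms] by blast
  moreover have "gd' d z > 0" using gd'_pos \<open>a < z\<close> assms by auto
  moreover have "(b - a) * gd' d z > 0" using calculation assms by simp
  ultimately show ?thesis by linarith
qed

lemma g_le_iff: assumes "1 \<le> a" "1 \<le> b" shows "g d a \<le> g d b \<longleftrightarrow> a \<le> b"
  using g_strict assms by (metis linorder_not_less order_le_less)

lemma g_ge1: "1 \<le> a \<Longrightarrow> 1 \<le> g d a"
  using g_le_iff[of 1 a] g1 by auto

lemma g_lip: assumes "1 \<le> a" "1 \<le> b" shows "\<bar>g d b - g d a\<bar> \<le> gconst d / real d * \<bar>b - a\<bar>"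
proof -
  have *: "\<bar>g d b - g d a\<bar> \<le> gconst d / real d * \<bar>b - a\<bar>" if ab: "1 \<le> a" "a < b" for a b
  proof -
    obtain z where "a < z" "z < b" "g d b - g d a = (b - a) * gd' d z" using g_mvt[OF ab] by blast
    moreover have "0 < gd' d z" "gd' d z \<le> gconst d / real d" using gd'_pos gd'_le \<open>a < z\<close> ab by auto
    moreover have "(b - a) * gd' d z \<le> (b - a) * (gconst d / real d)" using calculation ab by (intro mult_left_mono) auto
    ultimately show ?thesis using ab by (simp add: abs_mult mult.commute)
  qed
  show ?thesis
    using *[of a b] *[of b a] assms by (cases a b rule: linorder_cases) (auto simp: abs_minus_commute)
qed

lemma g_conv3: assumes "1 \<le> x" "x < y" "0 < t" "t < 1"
  shows "g d ((1 - t) * x + t * y) \<le> (1 - t) * g d x + t * g d y"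
proof -
  define z where "z = (1 - t) * x + t * y"
  have zx: "z - x = t * (y - x)" and yz: "y - z = (1 - t) * (y - x)" by (simp_all add: z_def algebra_simps)
  have p1: "t * (y - x) > 0" using assms by simp
  have p2: "(1 - t) * (y - x) > 0" using assms by simp
  have "x < z" using zx p1 by simp
  have "z < y" using yz p2 by simp
  obtain a where a: "x < a" "a < z" "g d z - g d x = (z - x) * gd' d a" using g_mvt[OF assms(1) \<open>x < z\<close>] by blast
  obtain b where b: "z < b" "b < y" "g d y - g d z = (y - z) * gd' d b" using g_mvt[of z y] \<open>x < z\<close> \<open>z < y\<close> assms by auto
  have m: "gd' d a \<le> gd' d b" using gd'_mono[of a b] a b assms by auto
  have "(1 - t) * (g d z - g d x) = (1 - t) * t * (y - x) * gd' d a" unfolding a zx by simp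
  also have "\<dots> \<le> (1 - t) * t * (y - x) * gd' d b"
    using m assms by (intro mult_left_mono) auto
  also have "\<dots> = t * (g d y - g d z)" unfolding b yz by simp
  finally have "(1 - t) * (g d z - g d x) \<le> t * (g d y - g d z)" .
  then show ?thesis unfolding z_def[symmetric] by (simp add: algebra_simps)
qed

lemma g_convex: "convex_on {1..} (g d)"
proof (rule convex_onI)
  fix t x y :: real assume t: "0 < t" "t < 1" and xy: "x \<in> {1..}" "y \<in> {1..}"
  show "g d ((1 - t) *\<^sub>R x + t *\<^sub>R y) \<le> (1 - t) * g d x + t * g d y"
  proof (cases x y rule: linorder_cases)
    case less then show ?thesis using g_conv3[of x y t] t xy by simp
  next
    case equal then show ?thesis by (simp add: algebra_simps)
  next
    case greater then show ?thesis using g_conv3[of y x "1 - t"] t xy by (simp add: algebra_simps)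
  qed
qed (simp add: convex_real_interval)

lemma g_incr_core: assumes "1 \<le> p" "0 \<le> L" "p + L \<le> q"
  shows "g d (p + L) - g d p \<le> g d (q + L) - g d q"
proof (cases "L = 0")
  case True then show ?thesis by simp
next
  case False
  then have L: "L > 0" using assms by auto
  obtain a where a: "p < a" "a < p + L" "g d (p + L) - g d p = (p + L - p) * gd' d a" using g_mvt[of p "p+L"] assms L by auto
  obtain b where b: "q < b" "b < q + L" "g d (q + L) - g d q = (q + L - q) * gd' d b" using g_mvt[of q "q+L"] assms L by auto
  have "gd' d a \<le> gd' d b" using gd'_mono[of a b] a b assms by auto
  then show ?thesis unfolding a(3) b(3) using L by simp
qed

lemma g_incr: assumes "1 \<le> p" "0 \<le> L" "p \<le> q"
  shows "g d (p + L) - g d p \<le> g d (q + L) - g d q"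
proof (cases "p + L \<le> q")
  case True then show ?thesis using g_incr_core assms by blast
next
  case False
  have "g d (p + (q - p)) - g d p \<le> g d ((p + L) + (q - p)) - g d (p + L)"
    using False assms by (intro g_incr_core) auto
  then show ?thesis by (simp add: algebra_simps)
qed

end


context fixes d :: nat assumes d: "d \<ge> 1"
begin

lemma g_lower_lin: assumes "2 \<le> t" shows "g d 2 + gd' d 2 * (t - 2) \<le> g d t"
proof (cases "t = 2")
  case True then show ?thesis by simp
next
  case False
  then obtain z where z: "2 < z" "z < t" "g d t - g d 2 = (t - 2) * gd' d z" using g_mvt[OF d, of 2 t] assms by auto
  have "gd' d 2 \<le> gd' d z" using gd'_mono[OF d, of 2 z] z by auto
  then have "gd' d 2 * (t - 2) \<le> gd' d z * (t - 2)" using assms by (intro mult_right_mono) auto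
  then show ?thesis using z by (simp add: algebra_simps)
qed

lemma g_big: "\<exists>T\<ge>2. \<forall>t\<ge>T. Z \<le> g d t"
proof -
  define k where "k = gd' d 2"
  have k: "k > 0" using gd'_pos[OF d] by (simp add: k_def)
  define T where "T = max 2 (2 + (Z - g d 2) / k)"
  have "Z \<le> g d t" if "t \<ge> T" for t
  proof -
    have "Z - g d 2 \<le> k * (t - 2)" using that k by (simp add: T_def field_simps)
    then show ?thesis using g_lower_lin[of t] that by (simp add: T_def k_def algebra_simps)
  qed
  then show ?thesis by (intro exI[of _ T]) (auto simp: T_def)
qed

lemma g_filterlim: "filterlim (g d) at_top at_top"
  unfolding filterlim_at_top eventually_at_top_linorder using g_big by blast

lemma g_image: "g d ` {1..} = {1..}"
proof
  show "g d ` {1..} \<subseteq> {1..}" using g_ge1[OF d] by auto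
  show "{1..} \<subseteq> g d ` {1..}"
  proof
    fix y :: real assume y: "y \<in> {1..}"
    obtain T where T: "T \<ge> 2" "\<forall>t\<ge>T. y \<le> g d t" using g_big by blast
    have "\<exists>x. 1 \<le> x \<and> x \<le> T \<and> g d x = y"
      by (rule IVT') (use y T g1[OF d] in \<open>auto intro: continuous_on_subset[OF g_cont[OF d]]\<close>)
    then show "y \<in> g d ` {1..}" by force
  qed
qed

lemma g_inj: "inj_on (g d) {1..}"
  by (rule strict_mono_on_imp_inj_on, rule strict_mono_onI) (use g_strict[OF d] in auto)

lemma ginv_g: "1 \<le> a \<Longrightarrow> g_inv d (g d a) = a"
  unfolding g_inv_def using g_inj by (simp add: the_inv_into_f_f)

lemma g_ginv: "1 \<le> y \<Longrightarrow> g d (g_inv d y) = y"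
  unfolding g_inv_def using g_inj g_image by (simp add: f_the_inv_into_f)

lemma ginv_ge1: "1 \<le> y \<Longrightarrow> 1 \<le> g_inv d y"
  unfolding g_inv_def using g_inj g_image the_inv_into_into[of "g d" "{1..}" y "{1..}"] by auto

lemma ginv_le_iff: "1 \<le> y \<Longrightarrow> 1 \<le> y' \<Longrightarrow> g_inv d y \<le> g_inv d y' \<longleftrightarrow> y \<le> y'"
  using g_le_iff[OF d, of "g_inv d y" "g_inv d y'"] g_ginv ginv_ge1 by auto

lemma mod_bound:
  assumes "1 \<le> s" "s \<le> t" "t - s < h"
  shows "g_inv d t - g_inv d s \<le> g_inv d (1 + h) - 1"
proof -
  define a where "a = g_inv d s"
  define L where "L = g_inv d t - a"
  have a: "1 \<le> a" using ginv_ge1 assms by (simp add: a_def)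
  have L: "0 \<le> L" using ginv_le_iff[of s t] assms by (simp add: L_def a_def)
  have "g d (1 + L) - g d 1 \<le> g d (a + L) - g d a" using g_incr[OF d, of 1 L a] a L by simp
  also have "\<dots> = t - s" using assms g_ginv by (simp add: L_def a_def)
  finally have "g d (1 + L) < 1 + h" using assms g1[OF d] by simp
  also have "1 + h = g d (g_inv d (1 + h))" using g_ginv assms by simp
  finally have "1 + L < g_inv d (1 + h)"
    using g_le_iff[OF d, of "g_inv d (1 + h)" "1 + L"] L ginv_ge1[of "1 + h"] assms by force
  then show ?thesis by (simp add: L_def a_def)
qed

lemma modulus_eq:
  assumes h: "h \<ge> 0"
  shows "modulus_of_continuity (g_inv d) {1..} h = g_inv d (1 + h) - 1"
  unfolding modulus_of_continuity_def
proof (rule cSup_eq)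
  fix x assume "x \<in> {\<bar>g_inv d s - g_inv d t\<bar> |s t. s \<in> {1..} \<and> t \<in> {1..} \<and> \<bar>s - t\<bar> < h} \<union> {0}"
  then show "x \<le> g_inv d (1 + h) - 1"
  proof
    assume "x \<in> {0}" then show ?thesis using ginv_ge1[of "1 + h"] h by simp
  next
    assume "x \<in> {\<bar>g_inv d s - g_inv d t\<bar> |s t. s \<in> {1..} \<and> t \<in> {1..} \<and> \<bar>s - t\<bar> < h}"
    then obtain s t where st: "x = \<bar>g_inv d s - g_inv d t\<bar>" "1 \<le> s" "1 \<le> t" "\<bar>s - t\<bar> < h" by auto
    show ?thesis
    proof (cases "s \<le> t")
      case True
      then have "g_inv d s \<le> g_inv d t" using ginv_le_iff st by simp
      then show ?thesis using mod_bound[of s t h] st True by simp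
    next
      case False
      then have "g_inv d t \<le> g_inv d s" using ginv_le_iff st by simp
      then show ?thesis using mod_bound[of t s h] st False by simp
    qed
  qed
next
  fix y assume ub: "\<And>x. x \<in> {\<bar>g_inv d s - g_inv d t\<bar> |s t. s \<in> {1..} \<and> t \<in> {1..} \<and> \<bar>s - t\<bar> < h} \<union> {0} \<Longrightarrow> x \<le> y"
  show "g_inv d (1 + h) - 1 \<le> y"
  proof (rule ccontr)
    assume "\<not> ?thesis"
    then have lt: "y < g_inv d (1 + h) - 1" by simp
    have y0: "0 \<le> y" using ub by auto
    define c where "c = g_inv d (1 + h)"
    define a where "a = (y + 1 + c) / 2"
    have a: "1 \<le> a" "a < c" using lt y0 by (auto simp: a_def c_def)
    have "g d a < g d c" using g_strict[OF d a(1) a(2)] .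
    also have "g d c = 1 + h" using g_ginv h by (simp add: c_def)
    finally have ga: "g d a < 1 + h" .
    have ga1: "1 \<le> g d a" using g_ge1[OF d a(1)] .
    have ginv1: "g_inv d 1 = 1" using ginv_g[of 1] g1[OF d] by simp
    have "\<bar>g_inv d (g d a) - g_inv d 1\<bar> \<in> {\<bar>g_inv d s - g_inv d t\<bar> |s t. s \<in> {1..} \<and> t \<in> {1..} \<and> \<bar>s - t\<bar> < h}"
      using ga ga1 by force
    then have "\<bar>g_inv d (g d a) - g_inv d 1\<bar> \<le> y" using ub by blast
    then have "a - 1 \<le> y" using ginv_g[OF a(1)] ginv1 a by simp
    then show False using lt unfolding a_def c_def by (simp add: field_simps)
  qed
qed

end


context fixes d :: nat assumes d: "d \<ge> 1"
begin

lemma pow_combine: assumes "0 \<le> x" shows "x * x powr ((real d - 1) / 2) = x powr ((real d + 1) / 2)"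
proof (cases "x = 0")
  case True then show ?thesis by simp
next
  case False
  have "(real d + 1) / 2 = 1 + (real d - 1) / 2" by (simp add: field_simps)
  then show ?thesis using assms False by (simp only: powr_add) simp
qed

lemma g_upper: assumes t: "t > 1"
  shows "g d t - 1 \<le> gconst d / real d * 2 powr ((real d - 1) / 2) * (t - 1) powr ((real d + 1) / 2)"
proof -
  obtain z where z: "1 < z" "z < t" "g d t - g d 1 = (t - 1) * gd' d z" using g_mvt[OF d, of 1 t] t by auto
  have zz: "z * 1 \<le> z * z" using z by (intro mult_left_mono) auto
  then have "z + 1 \<le> 2 * (z * z)" using z by linarith
  then have "(z - 1) * (z + 1) \<le> (z - 1) * (2 * (z * z))" using z by (intro mult_left_mono) auto
  then have "(z - 1) * (z + 1) / (z * z) \<le> (z - 1) * (2 * (z * z)) / (z * z)" using z by (intro divide_right_mono) auto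
  also have "(z - 1) * (2 * (z * z)) / (z * z) = 2 * (z - 1)" using z by simp
  also have "(z - 1) * (z + 1) / (z * z) = 1 - 1/z\<^sup>2" using z by (simp add: power2_eq_square diff_divide_distrib algebra_simps)
  finally have "1 - 1/z\<^sup>2 \<le> 2 * (z - 1)" .
  also have "\<dots> \<le> 2 * (t - 1)" using z by simp
  finally have "(1 - 1/z\<^sup>2) powr ((real d - 1) / 2) \<le> (2 * (t - 1)) powr ((real d - 1) / 2)"
    using u_nonneg[of z] z d by (intro powr_mono2) auto
  also have "\<dots> = 2 powr ((real d - 1) / 2) * (t - 1) powr ((real d - 1) / 2)"
    using t by (subst powr_mult) auto
  finally have b: "gd' d z \<le> gconst d / real d * (2 powr ((real d - 1) / 2) * (t - 1) powr ((real d - 1) / 2))"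
    unfolding gd'_def using gconst_pos[of d] d by (simp add: divide_right_mono mult_left_mono)
  have "g d t - 1 = (t - 1) * gd' d z" using z g1[OF d] by simp
  also have "\<dots> \<le> (t - 1) * (gconst d / real d * (2 powr ((real d - 1) / 2) * (t - 1) powr ((real d - 1) / 2)))"
    using b t by (intro mult_left_mono) auto
  also have "\<dots> = gconst d / real d * 2 powr ((real d - 1) / 2) * ((t - 1) * (t - 1) powr ((real d - 1) / 2))"
    by (simp only: mult_ac times_divide_eq_left times_divide_eq_right)
  also have "\<dots> = gconst d / real d * 2 powr ((real d - 1) / 2) * (t - 1) powr ((real d + 1) / 2)"
    using pow_combine[of "t - 1"] t by simp
  finally show ?thesis .
qed

lemma g_lower: assumes s: "1 < s" "s \<le> 2"
  shows "gconst d / real d * ((s - 1) / 2) powr ((real d + 1) / 2) \<le> g d s - 1"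
proof -
  define m where "m = (1 + s) / 2"
  have m: "1 < m" "m < s" "m \<le> 3/2" using s by (auto simp: m_def)
  have sm: "s - m = m - 1" "m - 1 = (s - 1) / 2" by (simp_all add: m_def field_simps)
  obtain z where z: "m < z" "z < s" "g d s - g d m = (s - m) * gd' d z" using g_mvt[OF d, of m s] m by auto
  have "m * m \<le> m * (3/2)" using m by (intro mult_left_mono) auto
  then have "m * m \<le> m + 1" using m by linarith
  then have "(m - 1) * (m * m) \<le> (m - 1) * (m + 1)" using m by (intro mult_left_mono) auto
  then have "(m - 1) * (m * m) / (m * m) \<le> (m - 1) * (m + 1) / (m * m)" using m by (intro divide_right_mono) auto
  also have "(m - 1) * (m + 1) / (m * m) = 1 - 1/m\<^sup>2" using m by (simp add: power2_eq_square diff_divide_distrib algebra_simps)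
  finally have "m - 1 \<le> 1 - 1/m\<^sup>2" using m by simp
  then have "(m - 1) powr ((real d - 1) / 2) \<le> (1 - 1/m\<^sup>2) powr ((real d - 1) / 2)"
    using m d by (intro powr_mono2) auto
  then have "gconst d / real d * (m - 1) powr ((real d - 1) / 2) \<le> gd' d m"
    unfolding gd'_def using gconst_pos[of d] d by (simp add: divide_right_mono mult_left_mono)
  also have "\<dots> \<le> gd' d z" using gd'_mono[OF d, of m z] m z by simp
  finally have b: "gconst d / real d * (m - 1) powr ((real d - 1) / 2) \<le> gd' d z" .
  have "gconst d / real d * ((s - 1) / 2) powr ((real d + 1) / 2)
      = (m - 1) * (gconst d / real d * (m - 1) powr ((real d - 1) / 2))"
  proof -
    have "((s - 1) / 2) powr ((real d + 1) / 2) = (m - 1) * (m - 1) powr ((real d - 1) / 2)"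
      unfolding sm(2)[symmetric] using pow_combine[of "m - 1"] m by simp
    then show ?thesis by simp
  qed
  also have "\<dots> \<le> (m - 1) * gd' d z" using b m by (intro mult_left_mono) auto
  also have "\<dots> = g d s - g d m" by (simp only: z(3) sm(1))
  also have "\<dots> \<le> g d s - 1" using g_ge1[OF d, of m] m by simp
  finally show ?thesis .
qed

lemma g_bigo: "(\<lambda>t. g d t - 1) \<in> O[at_right 1](\<lambda>t. (t - 1) powr ((real d + 1) / 2))"
proof (rule bigoI)
  have one_two: "(1::real) < 2" by simp
  show "\<forall>\<^sub>F x in at_right 1. norm (g d x - 1) \<le> (gconst d / real d * 2 powr ((real d - 1) / 2)) * norm ((x - 1) powr ((real d + 1) / 2))"
    using eventually_at_right_real[of 1 2, OF one_two]
  proof (rule eventually_mono)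
    fix x :: real assume "x \<in> {1<..<2}"
    then have x: "x > 1" by simp
    then show "norm (g d x - 1) \<le> (gconst d / real d * 2 powr ((real d - 1) / 2)) * norm ((x - 1) powr ((real d + 1) / 2))"
      using g_upper[OF x] g_ge1[OF d, of x] by simp
  qed
qed

lemma modulus_bigo: "modulus_of_continuity (g_inv d) {1..} \<in> O[at_right 0](\<lambda>h. h powr (2 / (real d + 1)))"
proof (rule bigoI)
  define K where "K = gconst d / real d"
  have K: "K > 0" using gconst_pos[of d] d by (simp add: K_def)
  define r where "r = 2 / (real d + 1)"
  have r: "r > 0" by (simp add: r_def)
  have g2': "0 < g d 2 - 1" using g_strict[OF d, of 1 2] g1[OF d] by simp
  show "\<forall>\<^sub>F h in at_right 0. norm (modulus_of_continuity (g_inv d) {1..} h) \<le> (2 / K powr r) * norm (h powr (2 / (real d + 1)))"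
    using eventually_at_right_real[of 0 "g d 2 - 1", OF g2']
  proof (rule eventually_mono)
    fix h :: real assume "h \<in> {0<..<g d 2 - 1}"
    then have h: "0 < h" "h < g d 2 - 1" by auto
    define s where "s = g_inv d (1 + h)"
    have s1: "1 \<le> s" using ginv_ge1[OF d, of "1 + h"] h by (simp add: s_def)
    have gs: "g d s = 1 + h" using g_ginv[OF d, of "1 + h"] h by (simp add: s_def)
    have s2: "s < 2" using g_le_iff[OF d, of 2 s] gs h s1 by auto
    have w: "modulus_of_continuity (g_inv d) {1..} h = s - 1" using modulus_eq[OF d, of h] h by (simp add: s_def)
    have hp: "0 \<le> h powr r" by simp
    have "s - 1 \<le> (2 / K powr r) * h powr r"
    proof (cases "s = 1")
      case True then show ?thesis using hp K by simp
    next
      case False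
      then have s1': "1 < s" using s1 by simp
      define q where "q = (s - 1) / 2"
      have q: "0 < q" using s1' by (simp add: q_def)
      have "K * q powr ((real d + 1) / 2) \<le> h" using g_lower[OF s1' ] s2 gs by (simp add: K_def q_def)
      then have "q powr ((real d + 1) / 2) \<le> h / K" using K by (simp add: field_simps)
      then have "(q powr ((real d + 1) / 2)) powr r \<le> (h / K) powr r" using r q by (intro powr_mono2) auto
      also have "(q powr ((real d + 1) / 2)) powr r = q"
      proof -
        have "(real d + 1) / 2 * r = 1" by (simp add: r_def)
        then show ?thesis using q by (simp add: powr_powr)
      qed
      also have "(h / K) powr r = h powr r / K powr r" using h K by (simp add: powr_divide)
      finally have "q \<le> h powr r / K powr r" .
      then show ?thesis by (simp add: q_def field_simps)
    qed
    then show "norm (modulus_of_continuity (g_inv d) {1..} h) \<le> (2 / K powr r) * norm (h powr (2 / (real d + 1)))"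
      using w s1 by (simp add: r_def)
  qed
qed

lemma ginv_bigo: "g_inv d \<in> O[at_top](\<lambda>t. t)"
proof (rule bigoI)
  define k where "k = gd' d 2"
  have k: "k > 0" using gd'_pos[OF d] by (simp add: k_def)
  have g2: "1 \<le> g d 2" using g_ge1[OF d, of 2] by simp
  show "\<forall>\<^sub>F y in at_top. norm (g_inv d y) \<le> (2 + 1 / k) * norm y"
    using eventually_ge_at_top[of "1::real"]
  proof (rule eventually_mono)
    fix y :: real assume y: "1 \<le> y"
    define s where "s = g_inv d y"
    have s1: "1 \<le> s" using ginv_ge1[OF d y] by (simp add: s_def)
    have gs: "g d s = y" using g_ginv[OF d y] by (simp add: s_def)
    have "s \<le> 2 + y / k"
    proof (cases "s \<ge> 2")
      case True
      then have "g d 2 + k * (s - 2) \<le> y" using g_lower_lin[OF d True] gs by (simp add: k_def)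
      then have "k * (s - 2) \<le> y" using g2 by simp
      then have "s - 2 \<le> y / k" using k by (simp add: field_simps)
      then show ?thesis by simp
    next
      case False
      then have "k * s \<le> k * 2" using k by (intro mult_left_mono) auto
      then have "s \<le> 2" using k by simp
      moreover have "0 \<le> y / k" using y k by simp
      ultimately show ?thesis by linarith
    qed
    also have "\<dots> \<le> (2 + 1/k) * y" using y k by (simp add: field_simps)
    finally show "norm (g_inv d y) \<le> (2 + 1 / k) * norm y" using s1 y by (simp add: s_def)
  qed
qed

end

theorem lemma2:
  fixes d :: nat
  assumes "d \<ge> 1"
  shows
    "g d ` {1..} \<subseteq> {1..}
     \<and> uniformly_continuous_on {1..} (g d)
     \<and> strict_mono_on {1..} (g d)
     \<and> convex_on {1..} (g d)
     \<and> g d 1 = 1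
     \<and> filterlim (g d) at_top at_top
     \<and> (\<forall>t>1. (g d has_real_derivative
            gconst d * (1 / real d) * (1 - 1 / t\<^sup>2) powr ((real d - 1) / 2)) (at t))
     \<and> (\<lambda>t. g d t - 1) \<in> O[at_right 1](\<lambda>t. (t - 1) powr ((real d + 1) / 2))
     \<and> bij_betw (g d) {1..} {1..}
     \<and> (\<forall>h\<ge>0. modulus_of_continuity (g_inv d) {1..} h = g_inv d (1 + h) - 1)
     \<and> modulus_of_continuity (g_inv d) {1..} \<in> O[at_right 0](\<lambda>h. h powr (2 / (real d + 1)))
     \<and> g_inv d \<in> O[at_top](\<lambda>t. t)"
proof -
  note d = assms
  have uc: "uniformly_continuous_on {1..} (g d)"
  proof (rule lipschitz_on_uniformly_continuous, rule lipschitz_onI)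
    fix x y :: real assume "x \<in> {1..}" "y \<in> {1..}"
    then show "dist (g d x) (g d y) \<le> gconst d / real d * dist x y"
      using g_lip[OF d, of y x] by (simp add: dist_real_def)
  next
    show "0 \<le> gconst d / real d" using gconst_pos[of d] by simp
  qed
  have sm: "strict_mono_on {1..} (g d)"
    by (rule strict_mono_onI) (use g_strict[OF d] in auto)
  have bij: "bij_betw (g d) {1..} {1..}"
    unfolding bij_betw_def using g_inj[OF d] g_image[OF d] by simp
  show ?thesis
    using g_image[OF d] uc sm g_convex[OF d] g1[OF d] g_filterlim[OF d] g_deriv[OF d] g_bigo[OF d]
      bij modulus_eq[OF d] modulus_bigo[OF d] ginv_bigo[OF d] by auto
qed

end
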